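(* Let $\mathfrak{f}=\sum_{\lambda\vdash4}c_\lambda\mathfrak{p}_\lambda$ with real $c_\lambda$. Then $\mathfrak{f}\in\mathfrak{P}_4$ if and only if for every $\alpha\in[0,1]$ the bivariate form $\Phi^\alpha_{\mathfrak{f}}(x,y)=\sum_{\lambda\vdash4}c_\lambda\Phi_\lambda(\alpha,1-\alpha,x,y)$ is nonnegative on $\mathbb{R}^2$.
   Context: $p^{(n)}_i=\frac1n(x_1^i+\dots+x_n^i)$, $p^{(n)}_\lambda=\prod_i p^{(n)}_{\lambda_i}$; $\mathfrak{p}_\lambda$ is the sequence $(p^{(n)}_\lambda)_{n\ge4}$, and $\mathfrak{f}=\sum c_\lambda\mathfrak{p}_\lambda$ is the sequence $(\sum c_\lambda p^{(n)}_\lambda)_{n\ge4}$. $\mathfrak{P}_4$ is the set of such sequences all of whose terms are nonnegative forms. For $\lambda=(\lambda_1,\dots,\lambda_l)\vdash4$, $\Phi_\lambda(s_1,s_2,t_1,t_2)=\prod_{i=1}^l(s_1t_1^{\lambda_i}+s_2t_2^{\lambda_i})$. *)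

theory Defs
  imports Complex_Main
begin

definition partitions :: "nat \<Rightarrow> nat list set" where
  "partitions n = {xs. sorted_wrt (\<ge>) xs \<and> 0 \<notin> set xs \<and> sum_list xs = n}"

text \<open>Normalized power sum p^(n)_i(x) = (x_1^i + ... + x_n^i)/n, variables x_0..x_{n-1}.\<close>
definition psum :: "nat \<Rightarrow> nat \<Rightarrow> (nat \<Rightarrow> real) \<Rightarrow> real" where
  "psum n i x = (\<Sum>j<n. x j ^ i) / real n"

definition ppart :: "nat \<Rightarrow> nat list \<Rightarrow> (nat \<Rightarrow> real) \<Rightarrow> real" where
  "ppart n lam x = prod_list (map (\<lambda>i. psum n i x) lam)"

text \<open>The sequence f = sum c_lambda p_lambda lies in P_4: every term (n >= 4) is a nonnegative form.\<close>
definition in_P4 :: "(nat list \<Rightarrow> real) \<Rightarrow> bool" where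
  "in_P4 c \<longleftrightarrow> (\<forall>n\<ge>4. \<forall>x::nat \<Rightarrow> real. 0 \<le> (\<Sum>lam\<in>partitions 4. c lam * ppart n lam x))"

definition Phi :: "nat list \<Rightarrow> real \<Rightarrow> real \<Rightarrow> real \<Rightarrow> real \<Rightarrow> real" where
  "Phi lam s1 s2 t1 t2 = prod_list (map (\<lambda>k. s1 * t1 ^ k + s2 * t2 ^ k) lam)"

end

theory Submission
  imports Defs "HOL-Real_Asymp.Real_Asymp"
begin


lemma partitions4: "partitions 4 = {[4],[3,1],[2,2],[2,1,1],[1,1,1,1]}"
proof
  show "{[4],[3,1],[2,2],[2,1,1],[1,1,1,1]} \<subseteq> partitions 4"
    by (auto simp: partitions_def)
next
  show "partitions 4 \<subseteq> {[4],[3,1],[2,2],[2,1,1],[1,1,1,1]}"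
  proof
    fix xs assume "xs \<in> partitions 4"
    hence h: "sorted_wrt (\<ge>) xs" "0 \<notin> set xs" "sum_list xs = 4"
      by (auto simp: partitions_def)
    consider "xs = []" | a where "xs=[a]" | a b where "xs=[a,b]" | a b c where "xs=[a,b,c]"
      | a b c d where "xs=[a,b,c,d]" | a b c d e ys where "xs = a#b#c#d#e#ys"
      by (metis list.exhaust)
    then show "xs \<in> {[4],[3,1],[2,2],[2,1,1],[1,1,1,1]}"
    proof cases
      case 6 then show ?thesis using h by auto
    qed (use h in auto)
  qed
qed

definition FF :: "(nat list \<Rightarrow> real) \<Rightarrow> real \<Rightarrow> real \<Rightarrow> real \<Rightarrow> real \<Rightarrow> real" where
  "FF c p1 p2 p3 p4 = c [4]*p4 + c [3,1]*(p3*p1) + c [2,2]*(p2*p2) + c [2,1,1]*(p2*(p1*p1))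
     + c [1,1,1,1]*(p1*(p1*(p1*p1)))"

lemma sum_part: "(\<Sum>lam\<in>partitions 4. c lam * prod_list (map g lam)) = FF c (g 1) (g 2) (g 3) (g 4)"
  by (simp add: partitions4 FF_def)


abbreviation MM :: "real \<Rightarrow> real \<Rightarrow> real \<Rightarrow> nat \<Rightarrow> real" where
  "MM a X Y i \<equiv> a * X ^ i + (1 - a) * Y ^ i"

lemma psum_var:
  assumes "n > 0"
  shows "psum n 2 x - (psum n 1 x)^2 \<ge> 0"
proof -
  define a where "a = psum n 1 x"
  have e: "\<And>t::real. (t - a)^2 = t^2 - 2*a*t + a^2" by algebra
  have "(\<Sum>j<n. (x j - a)^2) = (\<Sum>j<n. x j ^ 2) - 2*a*(\<Sum>j<n. x j) + real n * a^2"
    unfolding e by (simp add: sum.distrib sum_subtractf sum_distrib_left)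
  also have "(\<Sum>j<n. x j) = real n * a" using assms by (simp add: a_def psum_def)
  also have "(\<Sum>j<n. x j ^ 2) = real n * psum n 2 x" using assms by (simp add: psum_def)
  finally have "real n * (psum n 2 x - a^2) = (\<Sum>j<n. (x j - a)^2)"
    by (simp add: algebra_simps power2_eq_square)
  moreover have "(\<Sum>j<n. (x j - a)^2) \<ge> 0" by (simp add: sum_nonneg)
  ultimately show ?thesis using assms a_def
    by (metis of_nat_0_less_iff zero_le_mult_iff not_le)
qed

lemma psum_E:
  assumes "n > 0"
  shows "psum n 4 x - 2*(r+s)*psum n 3 x + ((r+s)^2+2*r*s)*psum n 2 x
      - 2*r*s*(r+s)*psum n 1 x + (r*s)^2 \<ge> 0"
proof -
  have e: "\<And>t::real. (t - r)^2*(t-s)^2 = t^4 - 2*(r+s)*t^3 + ((r+s)^2+2*r*s)*t^2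
      - 2*r*s*(r+s)*t + (r*s)^2" by algebra
  have "(\<Sum>j<n. (x j - r)^2*(x j-s)^2) = (\<Sum>j<n. x j^4) - 2*(r+s)*(\<Sum>j<n. x j^3)
     + ((r+s)^2+2*r*s)*(\<Sum>j<n. x j^2) - 2*r*s*(r+s)*(\<Sum>j<n. x j) + real n * (r*s)^2"
    unfolding e by (simp add: sum.distrib sum_subtractf sum_distrib_left)
  moreover have "(\<Sum>j<n. (x j - r)^2*(x j-s)^2) \<ge> 0" by (simp add: sum_nonneg)
  ultimately have "0 \<le> ((\<Sum>j<n. x j^4) - 2*(r+s)*(\<Sum>j<n. x j^3)
     + ((r+s)^2+2*r*s)*(\<Sum>j<n. x j^2) - 2*r*s*(r+s)*(\<Sum>j<n. x j) + real n * (r*s)^2) / real n"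
    by simp
  also have "\<dots> = psum n 4 x - 2*(r+s)*psum n 3 x + ((r+s)^2+2*r*s)*psum n 2 x
      - 2*r*s*(r+s)*psum n 1 x + (r*s)^2"
    using assms by (simp add: psum_def field_simps)
  finally show ?thesis .
qed

lemma alg:
  fixes M4 M3 S Q P2 R T c31a c4 P4 P3 :: real
  assumes "M4 - 2*S*M3 + Q*P2 - T + R = 0" "c31a = -2*S*c4"
  shows "c4*(P4-M4) + c31a*(P3-M3) = c4*(P4 - 2*S*P3 + Q*P2 - T + R)"
proof -
  have e: "M4 = 2*S*M3 - Q*P2 + T - R" using assms(1) by simp
  show ?thesis unfolding assms(2) by (subst e) (simp add: algebra_simps)
qed

lemma core:
  assumes c4: "c [4] > 0" and n: "n > 0"
    and H: "\<forall>a\<in>{0..1::real}. \<forall>X Y. 0 \<le> FF c (MM a X Y 1) (MM a X Y 2) (MM a X Y 3) (MM a X Y 4)"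
  shows "0 \<le> FF c (psum n 1 x) (psum n 2 x) (psum n 3 x) (psum n 4 x)"
proof -
  define a where "a = psum n 1 x"
  define P2 where "P2 = psum n 2 x"
  define P3 where "P3 = psum n 3 x"
  define P4 where "P4 = psum n 4 x"
  define v where "v = P2 - a^2"
  have v: "v \<ge> 0" using psum_var[OF n, of x] by (simp add: v_def a_def P2_def)
  define S where "S = - c [3,1] * a / (2 * c [4])"
  define K where "K = S - 2*a"
  define D where "D = sqrt (K^2 + 4*v)"
  define d1 where "d1 = (K + D)/2"
  define d2 where "d2 = (D - K)/2"
  define r where "r = a + d1"
  define s where "s = a - d2"
  define al where "al = (if D = 0 then 1/2 else d2 / D)"
  have "sqrt (K^2) \<le> sqrt (K^2 + 4*v)" using v by (intro real_sqrt_le_mono) simp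
  hence DK: "D \<ge> \<bar>K\<bar>" unfolding D_def by simp
  have D2: "D^2 = K^2 + 4*v" unfolding D_def using v by simp
  have d1: "d1 \<ge> 0" and d2: "d2 \<ge> 0" using DK by (auto simp: d1_def d2_def)
  have d12: "d1*d2 = v" using D2 by (simp add: d1_def d2_def algebra_simps power2_eq_square)
  have al: "al \<in> {0..1}" using d1 d2 DK by (auto simp: al_def d1_def d2_def)
  have rs: "r + s = S" by (simp add: r_def s_def d1_def d2_def K_def field_simps)
  have M1: "MM al r s 1 = a"
  proof (cases "D = 0")
    case True then have "d1 = 0" "d2 = 0" using DK by (auto simp: d1_def d2_def)
    then show ?thesis by (simp add: r_def s_def algebra_simps)
  next
    case False
    have hD: "D = d1 + d2" by (simp add: d1_def d2_def field_simps)
    have "d1 + d2 \<noteq> 0" using False hD by simp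
    then have e1: "al = d2/(d1+d2)" "1 - al = d1/(d1+d2)" using False hD by (auto simp: al_def field_simps)
    have "d2/(d1+d2)*(a+d1) + d1/(d1+d2)*(a-d2) = (d2*(a+d1) + d1*(a-d2))/(d1+d2)"
      by (simp only: times_divide_eq_left add_divide_distrib)
    also have "d2*(a+d1) + d1*(a-d2) = a*(d1+d2)" by algebra
    finally have "d2/(d1+d2)*(a+d1) + d1/(d1+d2)*(a-d2) = a" using \<open>d1+d2\<noteq>0\<close> by simp
    then show ?thesis unfolding e1(2) unfolding e1(1) by (simp add: r_def s_def)
  qed
  have M2: "MM al r s 2 = P2"
  proof (cases "D = 0")
    case True then have "d1 = 0" "d2 = 0" using DK by (auto simp: d1_def d2_def)
    then show ?thesis using d12 by (simp add: r_def s_def v_def algebra_simps)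
  next
    case False
    have hD: "D = d1 + d2" by (simp add: d1_def d2_def field_simps)
    have "d1 + d2 \<noteq> 0" using False hD by simp
    then have e1: "al = d2/(d1+d2)" "1 - al = d1/(d1+d2)" using False hD by (auto simp: al_def field_simps)
    have "d2/(d1+d2)*(a+d1)^2 + d1/(d1+d2)*(a-d2)^2 = (d2*(a+d1)^2 + d1*(a-d2)^2)/(d1+d2)"
      by (simp only: times_divide_eq_left add_divide_distrib)
    also have "d2*(a+d1)^2 + d1*(a-d2)^2 = (a^2 + d1*d2)*(d1+d2)" by algebra
    finally have "d2/(d1+d2)*(a+d1)^2 + d1/(d1+d2)*(a-d2)^2 = a^2 + d1*d2" using \<open>d1+d2\<noteq>0\<close> by simp
    then have "MM al r s 2 = a^2 + d1*d2" unfolding e1(2) unfolding e1(1) by (simp add: r_def s_def)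
    then show ?thesis using d12 by (simp add: v_def)
  qed
  have Enu: "MM al r s 4 - 2*(r+s)*MM al r s 3 + ((r+s)^2+2*r*s)*MM al r s 2
      - 2*r*s*(r+s)*MM al r s 1 + (r*s)^2 = 0"
    by (simp add: algebra_simps power2_eq_square power3_eq_cube power4_eq_xxxx)
  have E: "P4 - 2*(r+s)*P3 + ((r+s)^2+2*r*s)*P2 - 2*r*s*(r+s)*a + (r*s)^2 \<ge> 0"
    using psum_E[OF n, where r=r and s=s and x=x] by (simp add: P4_def P3_def P2_def a_def)
  have cS: "c [3,1] * a = - 2 * S * c [4]" using c4 by (simp add: S_def)
  have "FF c a P2 P3 P4 - FF c (MM al r s 1) (MM al r s 2) (MM al r s 3) (MM al r s 4)
     = c [4] * (P4 - MM al r s 4) + c [3,1] * a * (P3 - MM al r s 3)"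
    unfolding FF_def M1 M2 by (simp add: algebra_simps)
  also have "\<dots> = c [4] * (P4 - 2*(r+s)*P3 + ((r+s)^2+2*r*s)*P2 - 2*r*s*(r+s)*a + (r*s)^2)"
    using alg[OF Enu[unfolded M1 M2] cS[folded rs]] rs by simp
  finally have "FF c a P2 P3 P4 = FF c (MM al r s 1) (MM al r s 2) (MM al r s 3) (MM al r s 4)
     + c [4] * (P4 - 2*(r+s)*P3 + ((r+s)^2+2*r*s)*P2 - 2*r*s*(r+s)*a + (r*s)^2)" by simp
  moreover have "0 \<le> FF c (MM al r s 1) (MM al r s 2) (MM al r s 3) (MM al r s 4)"
    using H al by blast
  ultimately show ?thesis using E c4 unfolding a_def P2_def P3_def P4_def by simp
qed


lemma le_abs_scale: "a \<in> {0..1::real} \<Longrightarrow> a * b \<le> \<bar>b\<bar>"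
  by (cases "b \<ge> 0") (auto intro: mult_left_le_one_le order_trans[OF mult_nonneg_nonpos[of a b]] simp: mult_left_le_one_le)

lemma c4_nonneg:
  assumes H: "\<forall>a\<in>{0..1::real}. \<forall>X Y. 0 \<le> FF c (MM a X Y 1) (MM a X Y 2) (MM a X Y 3) (MM a X Y 4)"
  shows "c [4] \<ge> 0"
proof (rule ccontr)
  assume neg: "\<not> c [4] \<ge> 0"
  define K where "K = \<bar>c [3,1]\<bar> + \<bar>c [2,2]\<bar> + \<bar>c [2,1,1]\<bar> + \<bar>c [1,1,1,1]\<bar>"
  have K0: "K \<ge> 0" by (simp add: K_def)
  define a where "a = - c [4] / (2*K - c [4])"
  have a0: "a > 0" using neg K0 unfolding a_def by (intro divide_pos_pos) auto
  have a1: "a \<le> 1" using neg K0 unfolding a_def by (subst divide_le_eq_1) auto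
  have aI: "a \<in> {0..1}" using a0 a1 by simp
  have "0 \<le> FF c (MM a 1 0 1) (MM a 1 0 2) (MM a 1 0 3) (MM a 1 0 4)" using H aI by blast
  hence "0 \<le> FF c a a a a" by simp
  hence "0 \<le> a * (c [4] + a * (c [3,1] + c [2,2] + a * c [2,1,1] + (a*a) * c[1,1,1,1]))"
    by (simp add: FF_def algebra_simps)
  hence i: "0 \<le> c [4] + a * (c [3,1] + c [2,2] + a * c [2,1,1] + (a*a) * c[1,1,1,1])"
    using a0 by (simp add: zero_le_mult_iff)
  have aa: "a*a \<in> {0..1}" using a0 a1 by (simp add: mult_le_one)
  have "c [3,1] + c [2,2] + a * c [2,1,1] + (a*a) * c[1,1,1,1] \<le> K"
    using le_abs_scale[OF aI, of "c [2,1,1]"] le_abs_scale[OF aa, of "c [1,1,1,1]"]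
    unfolding K_def by linarith
  hence "a * (c [3,1] + c [2,2] + a * c [2,1,1] + (a*a) * c[1,1,1,1]) \<le> a * K"
    using a0 by (simp add: mult_left_mono)
  moreover have "c [4] + a * K < 0"
  proof -
    have d: "2*K - c [4] > 0" using neg K0 by simp
    have "(c [4] + a * K) * (2*K - c [4]) = c [4] * (K - c [4])"
      using d by (simp add: a_def field_simps)
    moreover have "c [4] * (K - c [4]) < 0" using neg K0 by (simp add: mult_neg_pos)
    ultimately show ?thesis using d by (metis mult_less_0_iff not_less_iff_gr_or_eq)
  qed
  ultimately show False using i by linarith
qed

lemma psum4_nonneg: "psum n 4 x \<ge> 0"
proof -
  have "\<And>j. x j ^ 4 \<ge> 0" by (metis even_numeral zero_le_power_eq)
  thus ?thesis unfolding psum_def by (simp add: sum_nonneg)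
qed

lemma dir2:
  assumes H: "\<forall>a\<in>{0..1::real}. \<forall>X Y. 0 \<le> FF c (MM a X Y 1) (MM a X Y 2) (MM a X Y 3) (MM a X Y 4)"
    and n: "n > 0"
  shows "0 \<le> FF c (psum n 1 x) (psum n 2 x) (psum n 3 x) (psum n 4 x)"
proof -
  have c4: "c [4] \<ge> 0" using c4_nonneg[OF H] .
  have FFe: "\<And>e p1 p2 p3 p4. FF (c([4] := c [4] + e)) p1 p2 p3 p4 = FF c p1 p2 p3 p4 + e * p4"
    by (simp add: FF_def algebra_simps)
  have pert: "0 \<le> FF c (psum n 1 x) (psum n 2 x) (psum n 3 x) (psum n 4 x) + e * psum n 4 x"
    if e: "e > 0" for e
  proof -
    have "0 \<le> FF (c([4] := c [4] + e)) (psum n 1 x) (psum n 2 x) (psum n 3 x) (psum n 4 x)"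
    proof (rule core)
      show "(c([4] := c [4] + e)) [4] > 0" using c4 e by simp
      show "0 < n" by (rule n)
      show "\<forall>a\<in>{0..1::real}. \<forall>X Y. 0 \<le> FF (c([4] := c [4] + e)) (MM a X Y 1) (MM a X Y 2) (MM a X Y 3) (MM a X Y 4)"
      proof (intro ballI allI)
        fix a X Y assume a: "a \<in> {0..1::real}"
        have "MM a X Y 4 \<ge> 0"
        proof -
          have "X^4 \<ge> 0" "Y^4 \<ge> 0" by (metis even_numeral zero_le_power_eq)+
          thus ?thesis using a by simp
        qed
        thus "0 \<le> FF (c([4] := c [4] + e)) (MM a X Y 1) (MM a X Y 2) (MM a X Y 3) (MM a X Y 4)"
          unfolding FFe using H a e by (simp add: add_nonneg_nonneg)
      qed
    qed
    thus ?thesis unfolding FFe .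
  qed
  show ?thesis
  proof (rule ccontr)
    define F where "F = FF c (psum n 1 x) (psum n 2 x) (psum n 3 x) (psum n 4 x)"
    define P where "P = psum n 4 x"
    assume "\<not> ?thesis"
    hence F: "F < 0" by (simp add: F_def)
    have P: "P \<ge> 0" by (simp add: P_def psum4_nonneg)
    define e where "e = - F / (P + 1)"
    have e: "e > 0" unfolding e_def using F P by (intro divide_pos_pos) auto
    have "0 \<le> F + e * P" using pert[OF e] by (simp add: F_def P_def)
    also have "F + e * P = F / (P + 1)" using P by (simp add: e_def field_simps)
    also have "\<dots> < 0" using F P by (simp add: divide_less_0_iff)
    finally show False by simp
  qed
qed


lemma sum_if_lt: "k \<le> n \<Longrightarrow> (\<Sum>j<n. if j < k then A else B) = real k * A + real (n - k) * (B::real)"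
proof (induction n)
  case 0 then show ?case by simp
next
  case (Suc n)
  show ?case
  proof (cases "k = Suc n")
    case True
    have "(\<Sum>j<Suc n. if j < k then A else B) = (\<Sum>j<Suc n. A)" using True by (intro sum.cong) auto
    then show ?thesis using True by simp
  next
    case False
    then have "k \<le> n" using Suc.prems by simp
    then show ?thesis using Suc.IH by (simp add: Suc_diff_le algebra_simps)
  qed
qed

lemma psum_two:
  assumes "k \<le> n" "n > 0"
  shows "psum n i (\<lambda>j. if j < k then X else Y) = MM (real k / real n) X Y i"
proof -
  have "(\<Sum>j<n. (if j < k then X else Y) ^ i) = (\<Sum>j<n. if j < k then X^i else Y^i)"
    by (intro sum.cong) auto
  also have "\<dots> = real k * X^i + real (n - k) * Y^i" using sum_if_lt[OF assms(1)] .
  finally show ?thesis using assms by (simp add: psum_def of_nat_diff field_simps)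
qed

lemma lo_aux: "(N::real) > 0 \<Longrightarrow> a*N - 1 \<le> k \<Longrightarrow> a - 1/N \<le> k/N"
proof -
  assume N: "N > 0" and h: "a*N - 1 \<le> k"
  have "a - 1/N = (a*N - 1)/N" using N by (simp add: field_simps)
  also have "\<dots> \<le> k/N" using N h by (intro divide_right_mono) auto
  finally show ?thesis .
qed
lemma hi_aux: "(N::real) > 0 \<Longrightarrow> k \<le> a*N \<Longrightarrow> k/N \<le> a"
  by (simp add: field_simps)

lemma dir1:
  assumes H: "\<forall>n\<ge>4. \<forall>x. 0 \<le> FF c (psum n 1 x) (psum n 2 x) (psum n 3 x) (psum n 4 x)"
    and a: "a \<in> {0..1::real}"
  shows "0 \<le> FF c (MM a X Y 1) (MM a X Y 2) (MM a X Y 3) (MM a X Y 4)"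
proof -
  define G where "G = (\<lambda>t. FF c (MM t X Y 1) (MM t X Y 2) (MM t X Y 3) (MM t X Y 4))"
  define u where "u = (\<lambda>m::nat. real (nat \<lfloor>a * real (m+4)\<rfloor>) / real (m+4))"
  have k: "nat \<lfloor>a * real (m+4)\<rfloor> \<le> m + 4" for m
  proof -
    have "a * real (m+4) \<le> real (m+4)" using a by (simp add: mult_left_le_one_le)
    hence "\<lfloor>a * real (m+4)\<rfloor> \<le> int (m+4)" by linarith
    thus ?thesis by linarith
  qed
  have Gu: "0 \<le> G (u m)" for m
  proof -
    have "0 \<le> FF c (psum (m+4) 1 (\<lambda>j. if j < nat \<lfloor>a * real (m+4)\<rfloor> then X else Y))
       (psum (m+4) 2 (\<lambda>j. if j < nat \<lfloor>a * real (m+4)\<rfloor> then X else Y))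
       (psum (m+4) 3 (\<lambda>j. if j < nat \<lfloor>a * real (m+4)\<rfloor> then X else Y))
       (psum (m+4) 4 (\<lambda>j. if j < nat \<lfloor>a * real (m+4)\<rfloor> then X else Y))"
      using H by simp
    moreover have pos: "0 < m + 4" by simp
    ultimately show ?thesis by (simp only: psum_two[OF k[of m] pos] G_def u_def)
  qed
  have fl: "a * real (m+4) - 1 \<le> real (nat \<lfloor>a * real (m+4)\<rfloor>)" "real (nat \<lfloor>a * real (m+4)\<rfloor>) \<le> a * real (m+4)" for m
  proof -
    have "a * real (m+4) \<ge> 0" using a by simp
    thus "a * real (m+4) - 1 \<le> real (nat \<lfloor>a * real (m+4)\<rfloor>)" "real (nat \<lfloor>a * real (m+4)\<rfloor>) \<le> a * real (m+4)"
      by linarith+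
  qed
  have lo: "a - 1 / real (m+4) \<le> u m" for m
    unfolding u_def by (rule lo_aux[OF _ fl(1)]) simp
  have hi: "u m \<le> a" for m
    unfolding u_def by (rule hi_aux[OF _ fl(2)]) simp
  have "(\<lambda>m. a - 1 / real (m+4)) \<longlonglongrightarrow> a" by real_asymp
  moreover have "\<forall>\<^sub>F m in sequentially. a - 1 / real (m+4) \<le> u m" using lo by simp
  moreover have "\<forall>\<^sub>F m in sequentially. u m \<le> a" using hi by simp
  ultimately have "u \<longlonglongrightarrow> a"
    using tendsto_sandwich[of "\<lambda>m. a - 1 / real (m+4)" u sequentially "\<lambda>m. a" a] by auto
  hence "(\<lambda>m. G (u m)) \<longlonglongrightarrow> G a"
    unfolding G_def FF_def by (intro tendsto_intros)
  hence "0 \<le> G a" using Gu by (intro LIMSEQ_le_const[of "\<lambda>m. G (u m)"]) auto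
  thus ?thesis by (simp only: G_def)
qed


theorem proposition7p1:
  fixes c :: "nat list \<Rightarrow> real"
  shows "in_P4 c \<longleftrightarrow>
    (\<forall>\<alpha>\<in>{0..1::real}. \<forall>x y :: real.
       0 \<le> (\<Sum>lam\<in>partitions 4. c lam * Phi lam \<alpha> (1 - \<alpha>) x y))"
  unfolding in_P4_def ppart_def Phi_def sum_part
proof
  assume H: "\<forall>n\<ge>4. \<forall>x. 0 \<le> FF c (psum n 1 x) (psum n 2 x) (psum n 3 x) (psum n 4 x)"
  show "\<forall>a\<in>{0..1::real}. \<forall>X Y. 0 \<le> FF c (MM a X Y 1) (MM a X Y 2) (MM a X Y 3) (MM a X Y 4)"
    using dir1[OF H] by blast
next
  assume H: "\<forall>a\<in>{0..1::real}. \<forall>X Y. 0 \<le> FF c (MM a X Y 1) (MM a X Y 2) (MM a X Y 3) (MM a X Y 4)"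
  show "\<forall>n\<ge>4. \<forall>x. 0 \<le> FF c (psum n 1 x) (psum n 2 x) (psum n 3 x) (psum n 4 x)"
    using dir2[OF H] by simp
qed

end
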